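(* Let $\widetilde{E(2)}$, $\Omega$ and the functions below be as in the context, and let $(c,\theta)\in\Omega$. Define $X=(x_1,x_2,x_3):\mathbb{C}\to\widetilde{E(2)}$ by $$x_3(u+iv)=-\lambda_1\lambda_2Dv+\lambda_1\lambda_2G(u),$$ $$x_1(u+iv)=-\frac{1}{(c^2+\lambda_1^2\lambda_2^2D^2)B}\Big[\tfrac{1}{\lambda_1}f'(u)\cos\varphi(u)M_1-\tfrac{1}{\lambda_1}(c-\varphi'(u))\sin\varphi(u)M_2-\tfrac{1}{\lambda_2}(c-\varphi'(u))\cos\varphi(u)M_3-\tfrac{1}{\lambda_2}f'(u)\sin\varphi(u)M_4\Big],$$ $$x_2(u+iv)=-\frac{1}{(c^2+\lambda_1^2\lambda_2^2D^2)B}\Big[\tfrac{1}{\lambda_1}f'(u)\cos\varphi(u)M_4-\tfrac{1}{\lambda_1}(c-\varphi'(u))\sin\varphi(u)M_3+\tfrac{1}{\lambda_2}(c-\varphi'(u))\cos\varphi(u)M_2+\tfrac{1}{\lambda_2}f'(u)\sin\varphi(u)M_1\Big],$$ where $B=B(u)$, $A=f(u)+cv$, $x_3=x_3(u+iv)$ and $M_1=c\cos x_3\cosh A-\lambda_1\lambda_2D\sin x_3\sinh A$, $M_2=c\cos x_3\sinh A-\lambda_1\lambda_2D\sin x_3\cosh A$, $M_3=c\sin x_3\sinh A+\lambda_1\lambda_2D\cos x_3\cosh A$, $M_4=c\sin x_3\cosh A+\lambda_1\lambda_2D\cos x_3\sinh A$. Then $X$ is a conformal minimal immersion from $\mathbb{C}$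 into $\widetilde{E(2)}$ whose Gauss map (for a suitable choice of unit normal) is $g(u+iv)=e^{f(u)+cv}e^{i\varphi(u)}$.
   Context: $\widetilde{E(2)}$ is $\mathbb{R}^3$ with coordinates $(x_1,x_2,x_3)$ and group law $(a_1,b_1,c_1)*(a_2,b_2,c_2)=(a_1+a_2\cos c_1-b_2\sin c_1,\ b_1+a_2\sin c_1+b_2\cos c_1,\ c_1+c_2)$, with the left-invariant metric $\lambda_1^2(\cos x_3\,dx_1+\sin x_3\,dx_2)^2+\lambda_2^2(-\sin x_3\,dx_1+\cos x_3\,dx_2)^2+\frac{1}{\lambda_1^2\lambda_2^2}dx_3^2$, where either $\lambda_1>\lambda_2>0$ or $\lambda_1=\lambda_2=1$. Its left-invariant orthonormal frame is $E_1=\frac{1}{\lambda_1}(\cos x_3\partial_{x_1}+\sin x_3\partial_{x_2})$, $E_2=\frac{1}{\lambda_2}(-\sin x_3\partial_{x_1}+\cos x_3\partial_{x_2})$, $E_3=\lambda_1\lambda_2\partial_{x_3}$; for an immersed surface with unit normal $N=N_1E_1+N_2E_2+N_3E_3$ the Gauss map is $g=\frac{N_1+iN_2}{1+N_3}$. For $c>0$ set $\theta_c^+=\pi$ if $c>\sqrt2\lambda_1$ and $\theta_c^+=\arccos(1-c^2/\lambda_1^2)\in(0,\pi]$ if $0<c\le\sqrt2\lambda_1$; $\Omega=\{(c,\theta)\in\mathbb{R}^2: c>0,\ \theta\in(-\theta_c^+,\theta_c^+)\}$. For $(c,\theta)\in\Omega$ let $D=\sin\theta/c$, let $\varphi:\mathbb{R}\to\mathbb{R}$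 be the (globally defined) solution of $\varphi'(u)=\sqrt{c^2+2\cos\theta\,B(u)-D^2B(u)^2}$, $\varphi(0)=0$, where $B(u)=\lambda_1^2\cos^2\varphi(u)+\lambda_2^2\sin^2\varphi(u)$; let $f$ be the solution of $f'(u)=DB(u)$, $f(0)=0$; and let $G(u)=\int_0^u\frac{c-\varphi'(s)}{B(s)}\,ds$. *)

theory Defs
  imports "HOL-Analysis.Analysis"
begin

text \<open>Points and tangent vectors are elements of real^3; components p$1, p$2, p$3
  correspond to the coordinates x1, x2, x3.\<close>

definition admissible_lambdas :: "real \<Rightarrow> real \<Rightarrow> bool" where
  "admissible_lambdas l1 l2 \<longleftrightarrow> (l1 > l2 \<and> l2 > 0) \<or> (l1 = 1 \<and> l2 = 1)"

definition metric :: "real \<Rightarrow> real \<Rightarrow> real^3 \<Rightarrow> real^3 \<Rightarrow> real^3 \<Rightarrow> real" where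
  "metric l1 l2 p a b =
     l1\<^sup>2 * (cos (p$3) * a$1 + sin (p$3) * a$2) * (cos (p$3) * b$1 + sin (p$3) * b$2)
   + l2\<^sup>2 * (- sin (p$3) * a$1 + cos (p$3) * a$2) * (- sin (p$3) * b$1 + cos (p$3) * b$2)
   + (a$3 * b$3) / (l1\<^sup>2 * l2\<^sup>2)"

definition metric_matrix :: "real \<Rightarrow> real \<Rightarrow> real^3 \<Rightarrow> real^3^3" where
  "metric_matrix l1 l2 p = (\<chi> i j. metric l1 l2 p (axis i 1) (axis j 1))"

definition metric_partial :: "real \<Rightarrow> real \<Rightarrow> real^3 \<Rightarrow> 3 \<Rightarrow> 3 \<Rightarrow> 3 \<Rightarrow> real" where
  "metric_partial l1 l2 p i j l =
     deriv (\<lambda>t. metric_matrix l1 l2 (p + t *\<^sub>R axis l 1) $ i $ j) 0"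

definition christoffel :: "real \<Rightarrow> real \<Rightarrow> real^3 \<Rightarrow> 3 \<Rightarrow> 3 \<Rightarrow> 3 \<Rightarrow> real" where
  "christoffel l1 l2 p k i j =
     (1/2) * (\<Sum>m\<in>UNIV. matrix_inv (metric_matrix l1 l2 p) $ k $ m *
        (metric_partial l1 l2 p j m i + metric_partial l1 l2 p i m j
         - metric_partial l1 l2 p i j m))"

text \<open>Left-invariant orthonormal frame E1, E2, E3 at the point p.\<close>
definition frame :: "real \<Rightarrow> real \<Rightarrow> real^3 \<Rightarrow> 3 \<Rightarrow> real^3" where
  "frame l1 l2 p k =
     (if k = 1 then (\<chi> i. if i = 1 then cos (p$3) / l1 else if i = 2 then sin (p$3) / l1 else 0)
      else if k = 2 then (\<chi> i. if i = 1 then - sin (p$3) / l2 else if i = 2 then cos (p$3) / l2 else 0)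
      else (\<chi> i. if i = 3 then l1 * l2 else 0))"

definition partial_u :: "(complex \<Rightarrow> real^3) \<Rightarrow> complex \<Rightarrow> real^3" where
  "partial_u X z = vector_derivative (\<lambda>t. X (z + complex_of_real t)) (at 0)"

definition partial_v :: "(complex \<Rightarrow> real^3) \<Rightarrow> complex \<Rightarrow> real^3" where
  "partial_v X z = vector_derivative (\<lambda>t. X (z + \<i> * complex_of_real t)) (at 0)"

text \<open>Covariant derivative along X of the vector field W (along X), in the direction
  of the coordinate vector field with coordinate derivative operator d and
  corresponding tangent vector dX:  (nabla W)^k = d W^k + Gamma^k_ij dX^i W^j.\<close>
definition cov_deriv ::
  "real \<Rightarrow> real \<Rightarrow> (complex \<Rightarrow> real^3) \<Rightarrow> ((complex \<Rightarrow> real^3) \<Rightarrow> complex \<Rightarrow> real^3)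
     \<Rightarrow> (complex \<Rightarrow> real^3) \<Rightarrow> complex \<Rightarrow> real^3" where
  "cov_deriv l1 l2 X d W z =
     (\<chi> k. d W z $ k + (\<Sum>i\<in>UNIV. \<Sum>j\<in>UNIV.
        christoffel l1 l2 (X z) k i j * d X z $ i * W z $ j))"

definition C2_immersion :: "(complex \<Rightarrow> real^3) \<Rightarrow> bool" where
  "C2_immersion X \<longleftrightarrow>
     (\<forall>z. X differentiable (at z)) \<and>
     (\<forall>z. partial_u X differentiable (at z)) \<and>
     (\<forall>z. partial_v X differentiable (at z)) \<and>
     continuous_on UNIV (partial_u X) \<and> continuous_on UNIV (partial_v X) \<and>
     continuous_on UNIV (partial_u (partial_u X)) \<and> continuous_on UNIV (partial_v (partial_u X)) \<and>
     continuous_on UNIV (partial_u (partial_v X)) \<and> continuous_on UNIV (partial_v (partial_v X)) \<and>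
     (\<forall>z. independent {partial_u X z, partial_v X z} \<and> partial_u X z \<noteq> partial_v X z)"

definition conformal :: "real \<Rightarrow> real \<Rightarrow> (complex \<Rightarrow> real^3) \<Rightarrow> bool" where
  "conformal l1 l2 X \<longleftrightarrow> (\<forall>z.
     metric l1 l2 (X z) (partial_u X z) (partial_u X z) = metric l1 l2 (X z) (partial_v X z) (partial_v X z) \<and>
     metric l1 l2 (X z) (partial_u X z) (partial_v X z) = 0)"

text \<open>Minimality: the mean curvature vector vanishes, i.e. the trace of the second
  fundamental form  g^{ab} nabla_a X_b  (E, F, G the first fundamental form) has no
  normal component, i.e. it lies in the span of X_u, X_v.\<close>
definition minimal_surface :: "real \<Rightarrow> real \<Rightarrow> (complex \<Rightarrow> real^3) \<Rightarrow> bool" where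
  "minimal_surface l1 l2 X \<longleftrightarrow> (\<forall>z.
     (let E = metric l1 l2 (X z) (partial_u X z) (partial_u X z);
          F = metric l1 l2 (X z) (partial_u X z) (partial_v X z);
          G = metric l1 l2 (X z) (partial_v X z) (partial_v X z);
          tau = (1 / (E * G - F\<^sup>2)) *\<^sub>R
                  (G *\<^sub>R cov_deriv l1 l2 X partial_u (partial_u X) z
                   - (2 * F) *\<^sub>R cov_deriv l1 l2 X partial_u (partial_v X) z
                   + E *\<^sub>R cov_deriv l1 l2 X partial_v (partial_v X) z)
      in tau \<in> span {partial_u X z, partial_v X z}))"

definition conformal_minimal_immersion :: "real \<Rightarrow> real \<Rightarrow> (complex \<Rightarrow> real^3) \<Rightarrow> bool" where
  "conformal_minimal_immersion l1 l2 X \<longleftrightarrow>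
     C2_immersion X \<and> conformal l1 l2 X \<and> minimal_surface l1 l2 X"

text \<open>N is a unit normal along X with frame components n (N = n1 E1 + n2 E2 + n3 E3),
  and the Gauss map (n1 + i n2)/(1 + n3) equals g.\<close>
definition has_gauss_map ::
  "real \<Rightarrow> real \<Rightarrow> (complex \<Rightarrow> real^3) \<Rightarrow> (complex \<Rightarrow> complex) \<Rightarrow> bool" where
  "has_gauss_map l1 l2 X g \<longleftrightarrow> (\<exists>N n :: complex \<Rightarrow> real^3. \<forall>z.
     N z = (\<Sum>k\<in>UNIV. n z $ k *\<^sub>R frame l1 l2 (X z) k) \<and>
     metric l1 l2 (X z) (N z) (N z) = 1 \<and>
     metric l1 l2 (X z) (N z) (partial_u X z) = 0 \<and>
     metric l1 l2 (X z) (N z) (partial_v X z) = 0 \<and>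
     g z = Complex (n z $ 1) (n z $ 2) / complex_of_real (1 + n z $ 3))"

definition theta_plus :: "real \<Rightarrow> real \<Rightarrow> real" where
  "theta_plus l1 c = (if c > sqrt 2 * l1 then pi else arccos (1 - c\<^sup>2 / l1\<^sup>2))"

definition Omega :: "real \<Rightarrow> (real \<times> real) set" where
  "Omega l1 = {(c, \<theta>). c > 0 \<and> - theta_plus l1 c < \<theta> \<and> \<theta> < theta_plus l1 c}"

definition Bfun :: "real \<Rightarrow> real \<Rightarrow> (real \<Rightarrow> real) \<Rightarrow> real \<Rightarrow> real" where
  "Bfun l1 l2 \<phi> u = l1\<^sup>2 * (cos (\<phi> u))\<^sup>2 + l2\<^sup>2 * (sin (\<phi> u))\<^sup>2"

definition Gfun :: "real \<Rightarrow> real \<Rightarrow> real \<Rightarrow> (real \<Rightarrow> real) \<Rightarrow> real \<Rightarrow> real" where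
  "Gfun l1 l2 c \<phi> u =
     (let h = (\<lambda>s. (c - deriv \<phi> s) / Bfun l1 l2 \<phi> s)
      in if 0 \<le> u then integral {0..u} h else - integral {u..0} h)"

definition Xmap :: "real \<Rightarrow> real \<Rightarrow> real \<Rightarrow> real \<Rightarrow> (real \<Rightarrow> real) \<Rightarrow> (real \<Rightarrow> real)
                    \<Rightarrow> complex \<Rightarrow> real^3" where
  "Xmap l1 l2 c \<theta> \<phi> f z =
    (let u = Re z; v = Im z; D = sin \<theta> / c; L = l1 * l2;
         B = Bfun l1 l2 \<phi> u; A = f u + c * v;
         x3 = - L * D * v + L * Gfun l1 l2 c \<phi> u;
         M1 = c * cos x3 * cosh A - L * D * sin x3 * sinh A;
         M2 = c * cos x3 * sinh A - L * D * sin x3 * cosh A;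
         M3 = c * sin x3 * sinh A + L * D * cos x3 * cosh A;
         M4 = c * sin x3 * cosh A + L * D * cos x3 * sinh A;
         fp = deriv f u; pp = deriv \<phi> u; K = c\<^sup>2 + L\<^sup>2 * D\<^sup>2;
         x1 = - (1 / (K * B)) *
              ((1/l1) * fp * cos (\<phi> u) * M1 - (1/l1) * (c - pp) * sin (\<phi> u) * M2
               - (1/l2) * (c - pp) * cos (\<phi> u) * M3 - (1/l2) * fp * sin (\<phi> u) * M4);
         x2 = - (1 / (K * B)) *
              ((1/l1) * fp * cos (\<phi> u) * M4 - (1/l1) * (c - pp) * sin (\<phi> u) * M3
               + (1/l2) * (c - pp) * cos (\<phi> u) * M2 + (1/l2) * fp * sin (\<phi> u) * M1)
     in (\<chi> i. if i = 1 then x1 else if i = 2 then x2 else x3))"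

end

theory Submission
  imports Defs
begin

lemma three_neq[simp]: "(1::3) \<noteq> 2" "(1::3) \<noteq> 3" "(2::3) \<noteq> 3" "(2::3) \<noteq> 1" "(3::3) \<noteq> 1" "(3::3) \<noteq> 2"
  by auto

definition vec3 :: "real \<Rightarrow> real \<Rightarrow> real \<Rightarrow> real^3" where
  "vec3 a b c = a *\<^sub>R axis 1 1 + b *\<^sub>R axis 2 1 + c *\<^sub>R axis 3 1"

lemma vec3_nth[simp]: "vec3 a b c $ 1 = a" "vec3 a b c $ 2 = b" "vec3 a b c $ 3 = c"
  by (simp_all add: vec3_def axis_def)

lemma vec3_eq_iff: "x = vec3 a b c \<longleftrightarrow> x$1 = a \<and> x$2 = b \<and> x$3 = c"
  by (auto simp: vec_eq_iff forall_3)

lemma vec3_add: "vec3 a b c + vec3 a' b' c' = vec3 (a+a') (b+b') (c+c')"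
  by (simp add: vec3_eq_iff)

lemma vec3_zero: "vec3 0 0 0 = 0"
  by (simp add: vec3_def)

lemma vec3_vd:
  assumes "(f1 has_real_derivative d1) (at x within s)" "(f2 has_real_derivative d2) (at x within s)" "(f3 has_real_derivative d3) (at x within s)"
  shows "((\<lambda>t. vec3 (f1 t) (f2 t) (f3 t)) has_vector_derivative vec3 d1 d2 d3) (at x within s)"
proof -
  have h: "((\<lambda>t. f t *\<^sub>R (e::real^3)) has_vector_derivative d *\<^sub>R e) (at x within s)"
    if "(f has_real_derivative d) (at x within s)" for f d e
    using has_vector_derivative_scaleR[OF that has_vector_derivative_const[of e]] by simp
  show ?thesis unfolding vec3_def
    by (intro has_vector_derivative_add h assms)
qed

definition fr :: "real \<Rightarrow> real \<Rightarrow> real \<Rightarrow> real \<Rightarrow> real \<Rightarrow> real \<Rightarrow> real^3" where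
  "fr l1 l2 x a1 a2 a3 = vec3 (cos x * a1 / l1 - sin x * a2 / l2) (sin x * a1 / l1 + cos x * a2 / l2) (l1 * l2 * a3)"

definition dfr :: "real \<Rightarrow> real \<Rightarrow> real \<Rightarrow> real \<Rightarrow> real \<Rightarrow> real^3" where
  "dfr l1 l2 x a1 a2 = vec3 (- sin x * a1 / l1 - cos x * a2 / l2) (cos x * a1 / l1 - sin x * a2 / l2) 0"

lemma fr_add: "fr l1 l2 x a1 a2 a3 + fr l1 l2 x b1 b2 b3 = fr l1 l2 x (a1+b1) (a2+b2) (a3+b3)"
  unfolding fr_def vec3_add by (simp add: vec3_eq_iff add_divide_distrib algebra_simps)

lemma fr_zero: "fr l1 l2 x 0 0 0 = 0"
  unfolding fr_def by (simp add: vec3_zero)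

lemma metric_fr:
  assumes "l1 \<noteq> 0" "l2 \<noteq> 0"
  shows "metric l1 l2 p (fr l1 l2 (p$3) a1 a2 a3) (fr l1 l2 (p$3) b1 b2 b3) = a1*b1 + a2*b2 + a3*b3"
proof -
  have s: "sin (p$3)^2 + cos (p$3)^2 = 1" by simp
  show ?thesis
    unfolding metric_def fr_def vec3_nth using assms
    apply (simp add: field_simps power2_eq_square)
    using s unfolding power2_eq_square by algebra
qed

lemma frame_sum:
  "(\<Sum>k\<in>UNIV. n $ k *\<^sub>R frame l1 l2 p k) = fr l1 l2 (p$3) (n$1) (n$2) (n$3)"
  unfolding sum_3 fr_def frame_def
  by (simp add: vec3_eq_iff algebra_simps)

definition cc1 :: "real \<Rightarrow> 3 \<Rightarrow> real" where
  "cc1 x i = (if i = 1 then cos x else if i = 2 then sin x else 0)"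
definition cc2 :: "real \<Rightarrow> 3 \<Rightarrow> real" where
  "cc2 x i = (if i = 1 then - sin x else if i = 2 then cos x else 0)"
definition d3 :: "3 \<Rightarrow> real" where
  "d3 i = (if i = 3 then 1 else 0)"
definition gf :: "real \<Rightarrow> real \<Rightarrow> real \<Rightarrow> 3 \<Rightarrow> 3 \<Rightarrow> real" where
  "gf l1 l2 x i j = l1\<^sup>2 * cc1 x i * cc1 x j + l2\<^sup>2 * cc2 x i * cc2 x j + d3 i * d3 j / (l1\<^sup>2 * l2\<^sup>2)"
definition hinv :: "real \<Rightarrow> real \<Rightarrow> real \<Rightarrow> real^3^3" where
  "hinv l1 l2 x = (\<chi> k m. cc1 x k * cc1 x m / l1\<^sup>2 + cc2 x k * cc2 x m / l2\<^sup>2 + l1\<^sup>2 * l2\<^sup>2 * d3 k * d3 m)"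

lemma cc_simps[simp]:
  "cc1 x 1 = cos x" "cc1 x 2 = sin x" "cc1 x 3 = 0"
  "cc2 x 1 = - sin x" "cc2 x 2 = cos x" "cc2 x 3 = 0"
  "d3 1 = 0" "d3 2 = 0" "d3 3 = 1"
  by (simp_all add: cc1_def cc2_def d3_def)

lemma axis_nth3[simp]: "axis (i::3) (1::real) $ j = (if j = i then 1 else 0)"
  by (simp add: axis_def)

lemma metric_matrix_eq: "metric_matrix l1 l2 p $ i $ j = gf l1 l2 (p$3) i j"
  using exhaust_3[of i] exhaust_3[of j]
  by (auto simp: metric_matrix_def metric_def gf_def)

lemma cc1_deriv: "((\<lambda>t. cc1 (x + t) i) has_real_derivative cc2 x i) (at 0)"
  using exhaust_3[of i]
  by (auto simp: cc1_def cc2_def intro!: derivative_eq_intros)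

lemma cc2_deriv: "((\<lambda>t. cc2 (x + t) i) has_real_derivative - cc1 x i) (at 0)"
  using exhaust_3[of i]
  by (auto simp: cc1_def cc2_def intro!: derivative_eq_intros)

lemma metric_partial_eq:
  "metric_partial l1 l2 p i j l =
     (if l = 3 then (l1\<^sup>2 - l2\<^sup>2) * (cc1 (p$3) i * cc2 (p$3) j + cc2 (p$3) i * cc1 (p$3) j) else 0)"
proof -
  have e: "metric_matrix l1 l2 (p + t *\<^sub>R axis l 1) $ i $ j = gf l1 l2 (p$3 + (if l = 3 then t else 0)) i j" for t
    by (simp add: metric_matrix_eq)
  show ?thesis
  proof (cases "l = 3")
    case True
    have "((\<lambda>t. gf l1 l2 (p$3 + t) i j) has_real_derivative
        (l1\<^sup>2 - l2\<^sup>2) * (cc1 (p$3) i * cc2 (p$3) j + cc2 (p$3) i * cc1 (p$3) j)) (at 0)"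
      unfolding gf_def
      by (rule derivative_eq_intros cc1_deriv cc2_deriv refl)+ (simp add: algebra_simps)
    then show ?thesis using True unfolding metric_partial_def e
      by (simp add: DERIV_imp_deriv)
  next
    case False
    then show ?thesis unfolding metric_partial_def e by simp
  qed
qed

lemma matrix_inv_eqI:
  fixes A B :: "real^'n^'n"
  assumes "A ** B = mat 1" "B ** A = mat 1"
  shows "matrix_inv A = B"
proof -
  let ?M = "matrix_inv A"
  have "A ** ?M = mat 1 \<and> ?M ** A = mat 1"
    unfolding matrix_inv_def by (rule someI[of _ B]) (use assms in simp)
  then have "?M = ?M ** (A ** B)" "(?M ** A) ** B = B" using assms by (simp_all add: matrix_mul_rid matrix_mul_lid)
  then show ?thesis by (simp add: matrix_mul_assoc)
qed

lemma metric_matrix_inv: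
  assumes "l1 \<noteq> 0" "l2 \<noteq> 0"
  shows "matrix_inv (metric_matrix l1 l2 p) = hinv l1 l2 (p$3)"
proof (rule matrix_inv_eqI)
  have s: "sin (p$3)^2 + cos (p$3)^2 = 1" by simp
  show "metric_matrix l1 l2 p ** hinv l1 l2 (p $ 3) = mat 1"
    unfolding vec_eq_iff matrix_matrix_mult_def mat_def forall_3 sum_3
    using assms s by (simp add: metric_matrix_eq gf_def hinv_def field_simps; algebra)
  show "hinv l1 l2 (p $ 3) ** metric_matrix l1 l2 p = mat 1"
    unfolding vec_eq_iff matrix_matrix_mult_def mat_def forall_3 sum_3
    using assms s by (simp add: metric_matrix_eq gf_def hinv_def field_simps; algebra)
qed

lemma chr_quad:
  assumes "l1 \<noteq> 0" "l2 \<noteq> 0"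
  shows "(\<Sum>i\<in>UNIV. \<Sum>j\<in>UNIV. christoffel l1 l2 p k i j * fr l1 l2 (p$3) a1 a2 a3 $ i * fr l1 l2 (p$3) a1 a2 a3 $ j)
     + l1 * l2 * a3 * dfr l1 l2 (p$3) a1 a2 $ k
     = fr l1 l2 (p$3) (- l2\<^sup>2 * a2 * a3) (l1\<^sup>2 * a1 * a3) ((l2\<^sup>2 - l1\<^sup>2) * a1 * a2) $ k"
proof -
  obtain x where x: "p$3 = x" by blast
  obtain C S where CS: "cos x = C" "sin x = S" by blast
  have s: "S^2 + C^2 = 1" using CS sin_cos_squared_add[of x] by simp
  have "\<forall>k\<in>{1,2,3::3}. (\<Sum>i\<in>UNIV. \<Sum>j\<in>UNIV. christoffel l1 l2 p k i j * fr l1 l2 (p$3) a1 a2 a3 $ i * fr l1 l2 (p$3) a1 a2 a3 $ j)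
     + l1 * l2 * a3 * dfr l1 l2 (p$3) a1 a2 $ k
     = fr l1 l2 (p$3) (- l2\<^sup>2 * a2 * a3) (l1\<^sup>2 * a1 * a3) ((l2\<^sup>2 - l1\<^sup>2) * a1 * a2) $ k"
    unfolding christoffel_def metric_matrix_inv[OF assms] metric_partial_eq sum_3 x
    apply (simp only: ball_simps)
    apply (intro conjI)
    apply (simp_all add: hinv_def fr_def dfr_def CS)
    using assms apply (simp_all add: field_simps power2_eq_square)
    using s by algebra+
  then show ?thesis using exhaust_3[of k] by auto
qed

lemma alg_W1U:
  fixes l1 l2 c D K B p Gpp pc ps hc hs g :: real
  assumes rt: "pc^2 + ps^2 = 1" and rh: "hc^2 - hs^2 = 1" and nz: "l1 \<noteq> 0" "l2 \<noteq> 0" "K \<noteq> 0"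
    and hK: "K = c^2 + (l1*l2)^2*D^2" and hB: "B = l1^2*pc^2+l2^2*ps^2" and hp: "p = c - B*g"
    and hG: "Gpp = (l2^2-l1^2)*(D^2+g^2)*ps*pc"
  shows "(-D*c*(-ps*p*hc+pc*hs*D*B)/l1+l1*D^2*(pc*p*hs+ps*hc*D*B)+(Gpp*c*ps*hs+g*c*pc*p*hs+g*c*ps*hc*D*B)/l1+l1*D*(Gpp*pc*hc-g*ps*p*hc+g*pc*hs*D*B))/K - (l1*l2*g)*((-l2*D^2*pc*hs - D*c*ps*hc/l2 + l2*D*g*ps*hc - g*c*pc*hs/l2)/K) = (D*hc*ps+g*hs*pc)/l1"
  using nz unfolding hG hp hB
  apply (simp add: field_simps)
  using rt rh hK by algebra

lemma alg_W2U:
  fixes l1 l2 c D K B p Gpp pc ps hc hs g :: real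
  assumes rt: "pc^2 + ps^2 = 1" and rh: "hc^2 - hs^2 = 1" and nz: "l1 \<noteq> 0" "l2 \<noteq> 0" "K \<noteq> 0"
    and hK: "K = c^2 + (l1*l2)^2*D^2" and hB: "B = l1^2*pc^2+l2^2*ps^2" and hp: "p = c - B*g"
    and hG: "Gpp = (l2^2-l1^2)*(D^2+g^2)*ps*pc"
  shows "(-l2*D^2*(-ps*p*hs+pc*hc*D*B)-D*c*(pc*p*hc+ps*hs*D*B)/l2+l2*D*(Gpp*ps*hc+g*pc*p*hc+g*ps*hs*D*B)-c*(Gpp*pc*hs-g*ps*p*hs+g*pc*hc*D*B)/l2)/K + (l1*l2*g)*((-D*c*pc*hc/l1 + l1*D^2*ps*hs + g*c*ps*hs/l1 + l1*D*g*pc*hc)/K) = (-D*hc*pc+g*hs*ps)/l2"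
  using nz unfolding hG hp hB
  apply (simp add: field_simps)
  using rt rh hK by algebra

lemma alg_W1V:
  fixes l1 l2 c D K B p Gpp pc ps hc hs g :: real
  assumes rt: "pc^2 + ps^2 = 1" and rh: "hc^2 - hs^2 = 1" and nz: "l1 \<noteq> 0" "l2 \<noteq> 0" "K \<noteq> 0"
    and hK: "K = c^2 + (l1*l2)^2*D^2" and hB: "B = l1^2*pc^2+l2^2*ps^2" and hp: "p = c - B*g"
    and hG: "Gpp = (l2^2-l1^2)*(D^2+g^2)*ps*pc"
  shows "(-D*c*pc*hs*c/l1+l1*D^2*ps*hc*c+g*c*ps*hc*c/l1+l1*D*g*pc*hs*c)/K + (l1*l2*D)*((-l2*D^2*pc*hs - D*c*ps*hc/l2 + l2*D*g*ps*hc - g*c*pc*hs/l2)/K) = (g*hc*ps-D*hs*pc)/l1"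
  using nz unfolding hG hp hB
  apply (simp add: field_simps)
  using rt rh hK by algebra

lemma alg_W2V:
  fixes l1 l2 c D K B p Gpp pc ps hc hs g :: real
  assumes rt: "pc^2 + ps^2 = 1" and rh: "hc^2 - hs^2 = 1" and nz: "l1 \<noteq> 0" "l2 \<noteq> 0" "K \<noteq> 0"
    and hK: "K = c^2 + (l1*l2)^2*D^2" and hB: "B = l1^2*pc^2+l2^2*ps^2" and hp: "p = c - B*g"
    and hG: "Gpp = (l2^2-l1^2)*(D^2+g^2)*ps*pc"
  shows "(-l2*D^2*pc*hc*c-D*c*ps*hs*c/l2+l2*D*g*ps*hs*c-g*c*pc*hc*c/l2)/K - (l1*l2*D)*((-D*c*pc*hc/l1 + l1*D^2*ps*hs + g*c*ps*hs/l1 + l1*D*g*pc*hc)/K) = (-g*hc*pc-D*hs*ps)/l2"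
  using nz unfolding hG hp hB
  apply (simp add: field_simps)
  using rt rh hK by algebra

lemma alg_F1:
  fixes l1 l2 c D K B p Gpp pc ps hc hs g :: real
  assumes rt: "pc^2 + ps^2 = 1" and rh: "hc^2 - hs^2 = 1" and nz: "l1 \<noteq> 0" "l2 \<noteq> 0" "K \<noteq> 0"
    and hK: "K = c^2 + (l1*l2)^2*D^2" and hB: "B = l1^2*pc^2+l2^2*ps^2" and hp: "p = c - B*g"
    and hG: "Gpp = (l2^2-l1^2)*(D^2+g^2)*ps*pc"
  shows "(D*hs*D*B*ps+D*hc*pc*p+Gpp*hs*pc+g*hc*D*B*pc-g*hs*ps*p) + (c*(g*hs*ps-D*hc*pc)) - l2^2*((-D*hc*pc+g*hs*ps)*g - (-g*hc*pc-D*hs*ps)*D) = 0"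
  using nz unfolding hG hp hB
  apply (simp add: field_simps)
  using rt rh hK by algebra

lemma alg_F2:
  fixes l1 l2 c D K B p Gpp pc ps hc hs g :: real
  assumes rt: "pc^2 + ps^2 = 1" and rh: "hc^2 - hs^2 = 1" and nz: "l1 \<noteq> 0" "l2 \<noteq> 0" "K \<noteq> 0"
    and hK: "K = c^2 + (l1*l2)^2*D^2" and hB: "B = l1^2*pc^2+l2^2*ps^2" and hp: "p = c - B*g"
    and hG: "Gpp = (l2^2-l1^2)*(D^2+g^2)*ps*pc"
  shows "(-D*hs*D*B*pc+D*hc*ps*p+Gpp*hs*ps+g*hc*D*B*ps+g*hs*pc*p) + (c*(-g*hs*pc-D*hc*ps)) + l1^2*((D*hc*ps+g*hs*pc)*g - (g*hc*ps-D*hs*pc)*D) = 0"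
  using nz unfolding hG hp hB
  apply (simp add: field_simps)
  using rt rh hK by algebra

lemma alg_F3:
  fixes l1 l2 c D K B p Gpp pc ps hc hs g :: real
  assumes rt: "pc^2 + ps^2 = 1" and rh: "hc^2 - hs^2 = 1" and nz: "l1 \<noteq> 0" "l2 \<noteq> 0" "K \<noteq> 0"
    and hK: "K = c^2 + (l1*l2)^2*D^2" and hB: "B = l1^2*pc^2+l2^2*ps^2" and hp: "p = c - B*g"
    and hG: "Gpp = (l2^2-l1^2)*(D^2+g^2)*ps*pc"
  shows "Gpp + (l2^2-l1^2)*((D*hc*ps+g*hs*pc)*(-D*hc*pc+g*hs*ps)+(g*hc*ps-D*hs*pc)*(-g*hc*pc-D*hs*ps)) = 0"
  using nz unfolding hG hp hB
  apply (simp add: field_simps)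
  using rt rh hK by algebra

lemma alg_E:
  fixes l1 l2 c D K B p Gpp pc ps hc hs g :: real
  assumes rt: "pc^2 + ps^2 = 1" and rh: "hc^2 - hs^2 = 1" and nz: "l1 \<noteq> 0" "l2 \<noteq> 0" "K \<noteq> 0"
    and hK: "K = c^2 + (l1*l2)^2*D^2" and hB: "B = l1^2*pc^2+l2^2*ps^2" and hp: "p = c - B*g"
    and hG: "Gpp = (l2^2-l1^2)*(D^2+g^2)*ps*pc"
  shows "(D*hc*ps+g*hs*pc)*(D*hc*ps+g*hs*pc)+(-D*hc*pc+g*hs*ps)*(-D*hc*pc+g*hs*ps)+g*g = (D^2+g^2)*hc^2"
  using nz unfolding hG hp hB
  apply (simp add: field_simps)
  using rt rh hK by algebra

lemma alg_G:
  fixes l1 l2 c D K B p Gpp pc ps hc hs g :: real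
  assumes rt: "pc^2 + ps^2 = 1" and rh: "hc^2 - hs^2 = 1" and nz: "l1 \<noteq> 0" "l2 \<noteq> 0" "K \<noteq> 0"
    and hK: "K = c^2 + (l1*l2)^2*D^2" and hB: "B = l1^2*pc^2+l2^2*ps^2" and hp: "p = c - B*g"
    and hG: "Gpp = (l2^2-l1^2)*(D^2+g^2)*ps*pc"
  shows "(g*hc*ps-D*hs*pc)*(g*hc*ps-D*hs*pc)+(-g*hc*pc-D*hs*ps)*(-g*hc*pc-D*hs*ps)+(-D)*(-D) = (D^2+g^2)*hc^2"
  using nz unfolding hG hp hB
  apply (simp add: field_simps)
  using rt rh hK by algebra

lemma alg_F:
  fixes l1 l2 c D K B p Gpp pc ps hc hs g :: real
  assumes rt: "pc^2 + ps^2 = 1" and rh: "hc^2 - hs^2 = 1" and nz: "l1 \<noteq> 0" "l2 \<noteq> 0" "K \<noteq> 0"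
    and hK: "K = c^2 + (l1*l2)^2*D^2" and hB: "B = l1^2*pc^2+l2^2*ps^2" and hp: "p = c - B*g"
    and hG: "Gpp = (l2^2-l1^2)*(D^2+g^2)*ps*pc"
  shows "(D*hc*ps+g*hs*pc)*(g*hc*ps-D*hs*pc)+(-D*hc*pc+g*hs*ps)*(-g*hc*pc-D*hs*ps)+g*(-D) = 0"
  using nz unfolding hG hp hB
  apply (simp add: field_simps)
  using rt rh hK by algebra

lemma alg_X1:
  fixes l1 l2 c D K B p pc ps hc hs g C S :: real
  assumes nz: "l1 \<noteq> 0" "l2 \<noteq> 0" "K \<noteq> 0" "B \<noteq> 0"
    and hK: "K = c^2 + (l1*l2)^2*D^2" and hp: "p = c - B*g"
  shows "- (1 / (K * B)) * (1 / l1 * (D * B) * pc * (c * C * hc - l1 * l2 * D * S * hs) - 1 / l1 * (c - p) * ps * (c * C * hs - l1 * l2 * D * S * hc) - 1 / l2 * (c - p) * pc * (c * S * hs + l1 * l2 * D * C * hc) - 1 / l2 * (D * B) * ps * (c * S * hc + l1 * l2 * D * C * hs)) = C * ((-D*c*pc*hc/l1 + l1*D^2*ps*hs + g*c*ps*hs/l1 + l1*D*g*pc*hc)/K) - S * ((-l2*D^2*pc*hs - D*c*ps*hc/l2 + l2*D*g*ps*hc - g*c*pc*hs/l2)/K)"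
  using nz unfolding hp
  apply (simp add: field_simps)
  by algebra

lemma alg_X2:
  fixes l1 l2 c D K B p pc ps hc hs g C S :: real
  assumes nz: "l1 \<noteq> 0" "l2 \<noteq> 0" "K \<noteq> 0" "B \<noteq> 0"
    and hK: "K = c^2 + (l1*l2)^2*D^2" and hp: "p = c - B*g"
  shows "- (1 / (K * B)) * (1 / l1 * (D * B) * pc * (c * S * hc + l1 * l2 * D * C * hs) - 1 / l1 * (c - p) * ps * (c * S * hs + l1 * l2 * D * C * hc) + 1 / l2 * (c - p) * pc * (c * C * hs - l1 * l2 * D * S * hc) + 1 / l2 * (D * B) * ps * (c * C * hc - l1 * l2 * D * S * hs)) = S * ((-D*c*pc*hc/l1 + l1*D^2*ps*hs + g*c*ps*hs/l1 + l1*D*g*pc*hc)/K) + C * ((-l2*D^2*pc*hs - D*c*ps*hc/l2 + l2*D*g*ps*hc - g*c*pc*hs/l2)/K)"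
  using nz unfolding hp
  apply (simp add: field_simps)
  by algebra

lemma vec3_scaleR: "r *\<^sub>R vec3 a b c = vec3 (r*a) (r*b) (r*c)"
  by (simp add: vec3_eq_iff)
lemma vec3_inj: "vec3 a b c = vec3 a' b' c' \<longleftrightarrow> a = a' \<and> b = b' \<and> c = c'"
  by (simp add: vec3_eq_iff)

lemma fr_vd:
  assumes l: "l1 \<noteq> 0" "l2 \<noteq> 0"
    and "(x has_real_derivative x') (at t within s)"
    "(a1 has_real_derivative a1') (at t within s)"
    "(a2 has_real_derivative a2') (at t within s)"
    "(a3 has_real_derivative a3') (at t within s)"
  shows "((\<lambda>t. fr l1 l2 (x t) (a1 t) (a2 t) (a3 t)) has_vector_derivative
           fr l1 l2 (x t) a1' a2' a3' + x' *\<^sub>R dfr l1 l2 (x t) (a1 t) (a2 t)) (at t within s)"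
proof -
  have "((\<lambda>t. fr l1 l2 (x t) (a1 t) (a2 t) (a3 t)) has_vector_derivative
     vec3 (cos (x t) * a1' / l1 - sin (x t) * x' * a1 t / l1 - (sin (x t) * a2' / l2 + cos (x t) * x' * a2 t / l2))
          (sin (x t) * a1' / l1 + cos (x t) * x' * a1 t / l1 + (cos (x t) * a2' / l2 - sin (x t) * x' * a2 t / l2))
          (l1 * l2 * a3')) (at t within s)"
    unfolding fr_def
    by (rule vec3_vd) (auto intro!: derivative_eq_intros assms simp: field_simps l)
  moreover have "vec3 (cos (x t) * a1' / l1 - sin (x t) * x' * a1 t / l1 - (sin (x t) * a2' / l2 + cos (x t) * x' * a2 t / l2))
          (sin (x t) * a1' / l1 + cos (x t) * x' * a1 t / l1 + (cos (x t) * a2' / l2 - sin (x t) * x' * a2 t / l2))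
          (l1 * l2 * a3') = fr l1 l2 (x t) a1' a2' a3' + x' *\<^sub>R dfr l1 l2 (x t) (a1 t) (a2 t)"
    unfolding fr_def dfr_def vec3_scaleR vec3_add vec3_inj by (simp add: algebra_simps add_divide_distrib diff_divide_distrib)
  ultimately show ?thesis by simp
qed


locale sol =
  fixes l1 l2 c \<theta> :: real and \<phi> f :: "real \<Rightarrow> real"
  assumes lam: "admissible_lambdas l1 l2"
    and ct: "(c, \<theta>) \<in> Omega l1"
    and phi0: "\<phi> 0 = 0"
    and phi_ode: "\<And>u. (\<phi> has_real_derivative
          sqrt (c\<^sup>2 + 2 * cos \<theta> * Bfun l1 l2 \<phi> u - (sin \<theta> / c)\<^sup>2 * (Bfun l1 l2 \<phi> u)\<^sup>2)) (at u)"
    and f0: "f 0 = 0"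
    and f_ode: "\<And>u. (f has_real_derivative (sin \<theta> / c) * Bfun l1 l2 \<phi> u) (at u)"
begin

definition "D = sin \<theta> / c"
definition "B u = Bfun l1 l2 \<phi> u"
definition "R u = c\<^sup>2 + 2 * cos \<theta> * B u - D\<^sup>2 * (B u)\<^sup>2"
definition "pp u = sqrt (R u)"
definition "Gp u = (c - pp u) / B u"
definition "Gpp u = (l2\<^sup>2 - l1\<^sup>2) * (D\<^sup>2 + (Gp u)\<^sup>2) * sin (\<phi> u) * cos (\<phi> u)"

lemma l1_pos: "l1 > 0" and l2_pos: "l2 > 0" and l2_le: "l2 \<le> l1"
  using lam by (auto simp: admissible_lambdas_def)

lemma l1_nz[simp]: "l1 \<noteq> 0" and l2_nz[simp]: "l2 \<noteq> 0"
  using l1_pos l2_pos by auto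

lemma c_pos: "c > 0"
  using ct by (simp add: Omega_def)

lemma c_nz[simp]: "c \<noteq> 0" using c_pos by simp

lemma B_ge: "B u \<ge> l2\<^sup>2" and B_le: "B u \<le> l1\<^sup>2"
proof -
  have s: "sin (\<phi> u)^2 + cos (\<phi> u)^2 = 1" by simp
  have m: "l2\<^sup>2 \<le> l1\<^sup>2" using l2_le l2_pos by (simp add: power_mono)
  have e2: "l2\<^sup>2 = l2\<^sup>2 * sin (\<phi> u)^2 + l2\<^sup>2 * cos (\<phi> u)^2"
    by (metis sin_cos_squared_add mult_1_right distrib_left)
  have e1: "l1\<^sup>2 = l1\<^sup>2 * sin (\<phi> u)^2 + l1\<^sup>2 * cos (\<phi> u)^2"
    by (metis sin_cos_squared_add mult_1_right distrib_left)
  have "l2\<^sup>2 * cos (\<phi> u)^2 \<le> l1\<^sup>2 * cos (\<phi> u)^2" using m by (rule mult_right_mono) simp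
  then show "B u \<ge> l2\<^sup>2" unfolding B_def Bfun_def using e2 by linarith
  have "l2\<^sup>2 * sin (\<phi> u)^2 \<le> l1\<^sup>2 * sin (\<phi> u)^2" using m by (rule mult_right_mono) simp
  then have "B u \<le> l1\<^sup>2 * (sin (\<phi> u)^2 + cos (\<phi> u)^2)" unfolding B_def Bfun_def using e1
    by (simp add: algebra_simps)
  then show "B u \<le> l1\<^sup>2" by simp
qed

lemma B_pos: "B u > 0"
  using B_ge[of u] l2_pos by (smt (verit) zero_less_power)

lemma B_nz[simp]: "B u \<noteq> 0" using B_pos[of u] by simp

lemma cos_theta_gt: "(1 - cos \<theta>) * l1\<^sup>2 < c\<^sup>2"
proof (cases "c > sqrt 2 * l1")
  case True
  have "c\<^sup>2 > (sqrt 2 * l1)\<^sup>2" using True l1_pos by (simp add: power_strict_mono)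
  then have "c\<^sup>2 > 2 * l1\<^sup>2" by (simp add: power_mult_distrib)
  moreover have "(1 - cos \<theta>) * l1\<^sup>2 \<le> 2 * l1\<^sup>2"
    using cos_ge_minus_one[of \<theta>] by (intro mult_right_mono) auto
  ultimately show ?thesis by linarith
next
  case False
  let ?y = "1 - c\<^sup>2 / l1\<^sup>2"
  have tp: "theta_plus l1 c = arccos ?y" using False by (simp add: theta_plus_def)
  have th: "\<bar>\<theta>\<bar> < arccos ?y" using ct tp by (auto simp: Omega_def)
  have "c \<le> sqrt 2 * l1" using False by simp
  then have "c\<^sup>2 \<le> (sqrt 2 * l1)\<^sup>2" using c_pos by (simp add: power_mono)
  then have "c\<^sup>2 \<le> 2 * l1\<^sup>2" by (simp add: power_mult_distrib)
  then have y1: "-1 \<le> ?y" using l1_pos by (simp add: field_simps)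
  have y2: "?y \<le> 1" using l1_pos by simp
  have "cos (arccos ?y) < cos \<bar>\<theta>\<bar>"
    by (rule cos_monotone_0_pi) (use th arccos_ubound[OF y1 y2] in auto)
  then have "?y < cos \<theta>" using y1 y2 by (simp add: cos_arccos)
  then show ?thesis using l1_pos by (simp add: field_simps)
qed

lemma R_pos: "R u > 0"
proof -
  let ?k = "cos \<theta>" and ?b = "B u"
  have kk: "(D * c)\<^sup>2 = 1 - ?k\<^sup>2" unfolding D_def using sin_squared_eq[of \<theta>] by simp
  have e: "c\<^sup>2 * R u = (c\<^sup>2 + ?k * ?b - ?b) * (c\<^sup>2 + ?k * ?b + ?b)"
    unfolding R_def using kk by algebra
  have "(1 - ?k) * ?b \<le> (1 - ?k) * l1\<^sup>2"
    using B_le[of u] cos_le_one[of \<theta>] by (intro mult_left_mono) auto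
  then have p1: "c\<^sup>2 + ?k * ?b - ?b > 0" using cos_theta_gt by (simp add: algebra_simps)
  have "(1 + ?k) * ?b \<ge> 0" by (intro mult_nonneg_nonneg) (use cos_ge_minus_one[of \<theta>] B_pos[of u] in linarith)+
  then have p2: "c\<^sup>2 + ?k * ?b + ?b > 0" using c_pos by (simp add: algebra_simps add_pos_nonneg)
  have "c\<^sup>2 * R u > 0" using e p1 p2 by simp
  then show ?thesis using c_pos by (simp add: zero_less_mult_iff)
qed

lemma pp_pos: "pp u > 0" using R_pos[of u] by (simp add: pp_def)

lemma pp_sq: "(pp u)\<^sup>2 = R u" using R_pos[of u] by (simp add: pp_def)

lemma phi_deriv: "(\<phi> has_real_derivative pp u) (at u)"
  using phi_ode[of u] by (simp add: pp_def R_def B_def D_def)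

lemma f_deriv: "(f has_real_derivative D * B u) (at u)"
  using f_ode[of u] by (simp add: B_def D_def)

lemma deriv_phi: "deriv \<phi> u = pp u" using phi_deriv by (rule DERIV_imp_deriv)
lemma deriv_f: "deriv f u = D * B u" using f_deriv by (rule DERIV_imp_deriv)

lemma B_deriv: "(B has_real_derivative 2 * (l2\<^sup>2 - l1\<^sup>2) * sin (\<phi> u) * cos (\<phi> u) * pp u) (at u)"
  unfolding B_def[abs_def] Bfun_def
  by (auto intro!: derivative_eq_intros phi_deriv simp: algebra_simps power2_eq_square)

lemma R_deriv: "(R has_real_derivative (2 * cos \<theta> - 2 * D\<^sup>2 * B u) * (2 * (l2\<^sup>2 - l1\<^sup>2) * sin (\<phi> u) * cos (\<phi> u) * pp u)) (at u)"
  unfolding R_def[abs_def]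
  by (auto intro!: derivative_eq_intros B_deriv simp: algebra_simps power2_eq_square)

lemma pp_deriv: "(pp has_real_derivative 2 * (cos \<theta> - D\<^sup>2 * B u) * (l2\<^sup>2 - l1\<^sup>2) * sin (\<phi> u) * cos (\<phi> u)) (at u)"
proof -
  have d: "((\<lambda>x. sqrt (R x)) has_real_derivative inverse (sqrt (R u)) / 2 * ((2 * cos \<theta> - 2 * D\<^sup>2 * B u) * (2 * (l2\<^sup>2 - l1\<^sup>2) * sin (\<phi> u) * cos (\<phi> u) * pp u))) (at u)"
    by (rule DERIV_chain2[OF DERIV_real_sqrt[OF R_pos[of u]] R_deriv[of u]])
  have e: "(\<lambda>x. sqrt (R x)) = pp" by (simp add: pp_def[abs_def])
  have v: "inverse (sqrt (R u)) / 2 * ((2 * cos \<theta> - 2 * D\<^sup>2 * B u) * (2 * (l2\<^sup>2 - l1\<^sup>2) * sin (\<phi> u) * cos (\<phi> u) * pp u))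
     = 2 * (cos \<theta> - D\<^sup>2 * B u) * (l2\<^sup>2 - l1\<^sup>2) * sin (\<phi> u) * cos (\<phi> u)"
    using pp_pos[of u] unfolding pp_def[symmetric] by (simp add: field_simps)
  show ?thesis using d unfolding e v .
qed


definition "K = c\<^sup>2 + (l1*l2)\<^sup>2 * D\<^sup>2"

lemma K_pos: "K > 0" unfolding K_def using c_pos by (simp add: add_pos_nonneg)
lemma K_nz[simp]: "K \<noteq> 0" using K_pos by simp

lemma pp_eq: "pp u = c - B u * Gp u" unfolding Gp_def by simp
lemma B_eq: "B u = l1^2 * cos (\<phi> u)^2 + l2^2 * sin (\<phi> u)^2" unfolding B_def Bfun_def by simp
lemma rt: "cos x ^2 + sin x ^2 = (1::real)" by simp
lemma rh: "cosh x ^2 - sinh x ^2 = (1::real)" by (simp add: hyperbolic_pythagoras)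

lemma Gp_deriv: "(Gp has_real_derivative Gpp u) (at u)"
proof -
  have d: "(Gp has_real_derivative ((0 - 2 * (cos \<theta> - D\<^sup>2 * B u) * (l2\<^sup>2 - l1\<^sup>2) * sin (\<phi> u) * cos (\<phi> u)) * B u
      - (c - pp u) * (2 * (l2\<^sup>2 - l1\<^sup>2) * sin (\<phi> u) * cos (\<phi> u) * pp u)) / (B u * B u)) (at u)"
    unfolding Gp_def[abs_def]
    by (rule DERIV_divide[OF DERIV_diff[OF DERIV_const pp_deriv] B_deriv B_nz])
  have sq: "(pp u)^2 = c\<^sup>2 + 2 * cos \<theta> * B u - D\<^sup>2 * (B u)\<^sup>2" using pp_sq[of u] by (simp add: R_def)
  have "((0 - 2 * (cos \<theta> - D\<^sup>2 * B u) * (l2\<^sup>2 - l1\<^sup>2) * sin (\<phi> u) * cos (\<phi> u)) * B u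
      - (c - pp u) * (2 * (l2\<^sup>2 - l1\<^sup>2) * sin (\<phi> u) * cos (\<phi> u) * pp u)) / (B u * B u) = Gpp u"
    unfolding Gpp_def Gp_def using B_nz[of u] apply (simp add: field_simps)
    using sq by algebra
  with d show ?thesis by simp
qed

lemma pp_cont: "continuous_on UNIV pp"
  by (rule continuous_at_imp_continuous_on) (use DERIV_isCont[OF pp_deriv] in blast)
lemma Gp_cont: "continuous_on UNIV Gp"
  by (rule continuous_at_imp_continuous_on) (use DERIV_isCont[OF Gp_deriv] in blast)
lemma phi_cont: "continuous_on UNIV \<phi>"
  by (rule continuous_at_imp_continuous_on) (use DERIV_isCont[OF phi_deriv] in blast)
lemma f_cont: "continuous_on UNIV f"
  by (rule continuous_at_imp_continuous_on) (use DERIV_isCont[OF f_deriv] in blast)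

lemma G_deriv: "(Gfun l1 l2 c \<phi> has_real_derivative Gp u) (at u)"
proof -
  have h: "(\<lambda>s. (c - deriv \<phi> s) / Bfun l1 l2 \<phi> s) = Gp" by (rule ext) (simp add: Gp_def deriv_phi B_def)
  define a where "a = - (\<bar>u\<bar> + 1)"
  define b where "b = \<bar>u\<bar> + 1"
  have ab: "a < 0" "0 < b" "a < u" "u < b" unfolding a_def b_def by auto
  have intg: "Gp integrable_on {x..y}" for x y
    by (rule integrable_continuous_interval) (rule continuous_on_subset[OF Gp_cont], simp)
  have eq: "integral {a..t} Gp - integral {a..0} Gp = Gfun l1 l2 c \<phi> t" if "t \<in> {a<..<b}" for t
  proof (cases "0 \<le> t")
    case True
    have "integral {a..0} Gp + integral {0..t} Gp = integral {a..t} Gp"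
      using Henstock_Kurzweil_Integration.integral_combine[where a=a and c=0 and b=t and f=Gp] ab True intg by simp
    then show ?thesis using True unfolding Gfun_def Let_def h by simp
  next
    case False
    have "integral {a..t} Gp + integral {t..0} Gp = integral {a..0} Gp"
      using Henstock_Kurzweil_Integration.integral_combine[where a=a and c=t and b=0 and f=Gp] ab False that intg by simp
    then show ?thesis using False unfolding Gfun_def Let_def h by simp
  qed
  have "((\<lambda>x. integral {a..x} Gp) has_real_derivative Gp u) (at u within {a..b})"
    by (rule integral_has_real_derivative) (use ab continuous_on_subset[OF Gp_cont] in auto)
  moreover have "at u within {a..b} = at u"
    by (rule at_within_interior) (use ab in simp)
  ultimately have d: "((\<lambda>x. integral {a..x} Gp - integral {a..0} Gp) has_real_derivative Gp u) (at u)"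
    using DERIV_diff[OF _ DERIV_const, of "\<lambda>x. integral {a..x} Gp" "Gp u" u UNIV "integral {a..0} Gp"] by simp
  have o: "open {a<..<b}" "u \<in> {a<..<b}" using ab by auto
  show ?thesis
    by (rule has_field_derivative_transform_within_open[OF d o]) (rule eq)
qed

lemma G_cont: "continuous_on UNIV (Gfun l1 l2 c \<phi>)"
  by (rule continuous_at_imp_continuous_on) (use DERIV_isCont[OF G_deriv] in blast)

end

lemma partial_u_gen:
  fixes F Fu :: "real \<Rightarrow> real \<Rightarrow> real^3"
  assumes "\<And>u v. ((\<lambda>u. F u v) has_vector_derivative Fu u v) (at u)"
  shows "partial_u (\<lambda>z. F (Re z) (Im z)) = (\<lambda>z. Fu (Re z) (Im z))"
proof
  fix z :: complex
  have e: "(\<lambda>t. F (Re (z + complex_of_real t)) (Im (z + complex_of_real t))) = (\<lambda>u. F u (Im z)) \<circ> (\<lambda>t. Re z + t)"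
    by (rule ext) simp
  have d1: "((\<lambda>t. Re z + t) has_vector_derivative 1) (at 0)"
    by (auto intro!: derivative_eq_intros)
  have "((\<lambda>u. F u (Im z)) \<circ> (\<lambda>t. Re z + t) has_vector_derivative 1 *\<^sub>R Fu (Re z) (Im z)) (at 0)"
    by (rule vector_diff_chain_at[OF d1]) (use assms in simp)
  then show "partial_u (\<lambda>z. F (Re z) (Im z)) z = Fu (Re z) (Im z)"
    unfolding partial_u_def e by (simp add: vector_derivative_at)
qed

lemma partial_v_gen:
  fixes F Fv :: "real \<Rightarrow> real \<Rightarrow> real^3"
  assumes "\<And>u v. ((\<lambda>v. F u v) has_vector_derivative Fv u v) (at v)"
  shows "partial_v (\<lambda>z. F (Re z) (Im z)) = (\<lambda>z. Fv (Re z) (Im z))"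
proof
  fix z :: complex
  have e: "(\<lambda>t. F (Re (z + \<i> * complex_of_real t)) (Im (z + \<i> * complex_of_real t))) = (\<lambda>v. F (Re z) v) \<circ> (\<lambda>t. Im z + t)"
    by (rule ext) simp
  have d1: "((\<lambda>t. Im z + t) has_vector_derivative 1) (at 0)"
    by (auto intro!: derivative_eq_intros)
  have "((\<lambda>v. F (Re z) v) \<circ> (\<lambda>t. Im z + t) has_vector_derivative 1 *\<^sub>R Fv (Re z) (Im z)) (at 0)"
    by (rule vector_diff_chain_at[OF d1]) (use assms in simp)
  then show "partial_v (\<lambda>z. F (Re z) (Im z)) z = Fv (Re z) (Im z)"
    unfolding partial_v_def e by (simp add: vector_derivative_at)
qed

context sol begin

definition "A u v = f u + c * v"
definition "x3 u v = - (l1*l2) * D * v + (l1*l2) * Gfun l1 l2 c \<phi> u"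
definition "w1 u v = (-D * c * cos (\<phi> u) * cosh (A u v)/l1 + l1 * D^2 * sin (\<phi> u) * sinh (A u v) + Gp u * c * sin (\<phi> u) * sinh (A u v)/l1 + l1 * D * Gp u * cos (\<phi> u) * cosh (A u v))/K"
definition "w2 u v = (-l2 * D^2 * cos (\<phi> u) * sinh (A u v) - D * c * sin (\<phi> u) * cosh (A u v)/l2 + l2 * D * Gp u * sin (\<phi> u) * cosh (A u v) - Gp u * c * cos (\<phi> u) * sinh (A u v)/l2)/K"
definition "a1 u v = (D * cosh (A u v) * sin (\<phi> u)+Gp u * sinh (A u v) * cos (\<phi> u))"
definition "a2 u v = (-D * cosh (A u v) * cos (\<phi> u)+Gp u * sinh (A u v) * sin (\<phi> u))"
definition "b1 u v = (Gp u * cosh (A u v) * sin (\<phi> u)-D * sinh (A u v) * cos (\<phi> u))"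
definition "b2 u v = (-Gp u * cosh (A u v) * cos (\<phi> u)-D * sinh (A u v) * sin (\<phi> u))"
definition "a1u u v = (D * sinh (A u v) * D * B u * sin (\<phi> u)+D * cosh (A u v) * cos (\<phi> u) * pp u+Gpp u * sinh (A u v) * cos (\<phi> u)+Gp u * cosh (A u v) * D * B u * cos (\<phi> u)-Gp u * sinh (A u v) * sin (\<phi> u) * pp u)"
definition "a2u u v = (-D * sinh (A u v) * D * B u * cos (\<phi> u)+D * cosh (A u v) * sin (\<phi> u) * pp u+Gpp u * sinh (A u v) * sin (\<phi> u)+Gp u * cosh (A u v) * D * B u * sin (\<phi> u)+Gp u * sinh (A u v) * cos (\<phi> u) * pp u)"
definition "a1v u v = (c * (D * sinh (A u v) * sin (\<phi> u)+Gp u * cosh (A u v) * cos (\<phi> u)))"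
definition "a2v u v = (c * (-D * sinh (A u v) * cos (\<phi> u)+Gp u * cosh (A u v) * sin (\<phi> u)))"
definition "b1u u v = (Gpp u * cosh (A u v) * sin (\<phi> u)+Gp u * sinh (A u v) * D * B u * sin (\<phi> u)+Gp u * cosh (A u v) * cos (\<phi> u) * pp u-D * cosh (A u v) * D * B u * cos (\<phi> u)+D * sinh (A u v) * sin (\<phi> u) * pp u)"
definition "b2u u v = (-Gpp u * cosh (A u v) * cos (\<phi> u)-Gp u * sinh (A u v) * D * B u * cos (\<phi> u)+Gp u * cosh (A u v) * sin (\<phi> u) * pp u-D * cosh (A u v) * D * B u * sin (\<phi> u)-D * sinh (A u v) * cos (\<phi> u) * pp u)"
definition "b1v u v = (c * (Gp u * sinh (A u v) * sin (\<phi> u)-D * cosh (A u v) * cos (\<phi> u)))"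
definition "b2v u v = (c * (-Gp u * sinh (A u v) * cos (\<phi> u)-D * cosh (A u v) * sin (\<phi> u)))"

definition "XX u v = vec3 (cos (x3 u v) * w1 u v - sin (x3 u v) * w2 u v) (sin (x3 u v) * w1 u v + cos (x3 u v) * w2 u v) (x3 u v)"
definition "XU u v = fr l1 l2 (x3 u v) (a1 u v) (a2 u v) (Gp u)"
definition "XV u v = fr l1 l2 (x3 u v) (b1 u v) (b2 u v) (- D)"
definition "XUU u v = fr l1 l2 (x3 u v) (a1u u v) (a2u u v) (Gpp u) + (l1*l2*Gp u) *\<^sub>R dfr l1 l2 (x3 u v) (a1 u v) (a2 u v)"
definition "XUV u v = fr l1 l2 (x3 u v) (a1v u v) (a2v u v) 0 + (- (l1*l2)*D) *\<^sub>R dfr l1 l2 (x3 u v) (a1 u v) (a2 u v)"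
definition "XVU u v = fr l1 l2 (x3 u v) (b1u u v) (b2u u v) 0 + (l1*l2*Gp u) *\<^sub>R dfr l1 l2 (x3 u v) (b1 u v) (b2 u v)"
definition "XVV u v = fr l1 l2 (x3 u v) (b1v u v) (b2v u v) 0 + (- (l1*l2)*D) *\<^sub>R dfr l1 l2 (x3 u v) (b1 u v) (b2 u v)"

lemma A_du: "((\<lambda>u. A u v) has_real_derivative D * B u) (at u)"
  unfolding A_def by (auto intro!: derivative_eq_intros f_deriv)
lemma A_dv: "((\<lambda>v. A u v) has_real_derivative c) (at v)"
  unfolding A_def by (auto intro!: derivative_eq_intros)
lemma x3_du: "((\<lambda>u. x3 u v) has_real_derivative l1*l2*Gp u) (at u)"
  unfolding x3_def by (auto intro!: derivative_eq_intros G_deriv)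
lemma x3_dv: "((\<lambda>v. x3 u v) has_real_derivative - (l1*l2)*D) (at v)"
  unfolding x3_def by (auto intro!: derivative_eq_intros)

lemma w1_du0: "((\<lambda>u. w1 u v) has_real_derivative (-D * c * (-sin (\<phi> u) * pp u * cosh (A u v)+cos (\<phi> u) * sinh (A u v) * D * B u)/l1+l1 * D^2 * (cos (\<phi> u) * pp u * sinh (A u v)+sin (\<phi> u) * cosh (A u v) * D * B u)+(Gpp u * c * sin (\<phi> u) * sinh (A u v)+Gp u * c * cos (\<phi> u) * pp u * sinh (A u v)+Gp u * c * sin (\<phi> u) * cosh (A u v) * D * B u)/l1+l1 * D * (Gpp u * cos (\<phi> u) * cosh (A u v)-Gp u * sin (\<phi> u) * pp u * cosh (A u v)+Gp u * cos (\<phi> u) * sinh (A u v) * D * B u))/K) (at u)"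
  unfolding w1_def by (auto intro!: derivative_eq_intros phi_deriv Gp_deriv A_du simp: field_simps )

lemma w2_du0: "((\<lambda>u. w2 u v) has_real_derivative (-l2 * D^2 * (-sin (\<phi> u) * pp u * sinh (A u v)+cos (\<phi> u) * cosh (A u v) * D * B u)-D * c * (cos (\<phi> u) * pp u * cosh (A u v)+sin (\<phi> u) * sinh (A u v) * D * B u)/l2+l2 * D * (Gpp u * sin (\<phi> u) * cosh (A u v)+Gp u * cos (\<phi> u) * pp u * cosh (A u v)+Gp u * sin (\<phi> u) * sinh (A u v) * D * B u)-c * (Gpp u * cos (\<phi> u) * sinh (A u v)-Gp u * sin (\<phi> u) * pp u * sinh (A u v)+Gp u * cos (\<phi> u) * cosh (A u v) * D * B u)/l2)/K) (at u)"
  unfolding w2_def by (auto intro!: derivative_eq_intros phi_deriv Gp_deriv A_du simp: field_simps )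

lemma w1_dv0: "((\<lambda>v. w1 u v) has_real_derivative (-D * c * cos (\<phi> u) * sinh (A u v) * c/l1+l1 * D^2 * sin (\<phi> u) * cosh (A u v) * c+Gp u * c * sin (\<phi> u) * cosh (A u v) * c/l1+l1 * D * Gp u * cos (\<phi> u) * sinh (A u v) * c)/K) (at v)"
  unfolding w1_def by (auto intro!: derivative_eq_intros A_dv simp: field_simps )

lemma w2_dv0: "((\<lambda>v. w2 u v) has_real_derivative (-l2 * D^2 * cos (\<phi> u) * cosh (A u v) * c-D * c * sin (\<phi> u) * sinh (A u v) * c/l2+l2 * D * Gp u * sin (\<phi> u) * sinh (A u v) * c-Gp u * c * cos (\<phi> u) * cosh (A u v) * c/l2)/K) (at v)"
  unfolding w2_def by (auto intro!: derivative_eq_intros A_dv simp: field_simps )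

lemma a1_du: "((\<lambda>u. a1 u v) has_real_derivative a1u u v) (at u)"
  unfolding a1_def by (auto intro!: derivative_eq_intros phi_deriv Gp_deriv A_du simp: field_simps a1u_def)

lemma a1_dv: "((\<lambda>v. a1 u v) has_real_derivative a1v u v) (at v)"
  unfolding a1_def by (auto intro!: derivative_eq_intros A_dv simp: field_simps a1v_def)

lemma a2_du: "((\<lambda>u. a2 u v) has_real_derivative a2u u v) (at u)"
  unfolding a2_def by (auto intro!: derivative_eq_intros phi_deriv Gp_deriv A_du simp: field_simps a2u_def)

lemma a2_dv: "((\<lambda>v. a2 u v) has_real_derivative a2v u v) (at v)"
  unfolding a2_def by (auto intro!: derivative_eq_intros A_dv simp: field_simps a2v_def)

lemma b1_du: "((\<lambda>u. b1 u v) has_real_derivative b1u u v) (at u)"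
  unfolding b1_def by (auto intro!: derivative_eq_intros phi_deriv Gp_deriv A_du simp: field_simps b1u_def)

lemma b1_dv: "((\<lambda>v. b1 u v) has_real_derivative b1v u v) (at v)"
  unfolding b1_def by (auto intro!: derivative_eq_intros A_dv simp: field_simps b1v_def)

lemma b2_du: "((\<lambda>u. b2 u v) has_real_derivative b2u u v) (at u)"
  unfolding b2_def by (auto intro!: derivative_eq_intros phi_deriv Gp_deriv A_du simp: field_simps b2u_def)

lemma b2_dv: "((\<lambda>v. b2 u v) has_real_derivative b2v u v) (at v)"
  unfolding b2_def by (auto intro!: derivative_eq_intros A_dv simp: field_simps b2v_def)


lemma w1_du: "((\<lambda>u. w1 u v) has_real_derivative a1 u v / l1 + (l1*l2*Gp u) * w2 u v) (at u)"
  using w1_du0[where u=u and v=v]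
  unfolding alg_W1U[OF rt[of "\<phi> u"] rh[of "A u v"] l1_nz l2_nz K_nz K_def B_eq[of u] pp_eq[of u] Gpp_def[of u], unfolded diff_eq_eq] a1_def w2_def .
lemma w2_du: "((\<lambda>u. w2 u v) has_real_derivative a2 u v / l2 - (l1*l2*Gp u) * w1 u v) (at u)"
  using w2_du0[where u=u and v=v]
  unfolding alg_W2U[OF rt[of "\<phi> u"] rh[of "A u v"] l1_nz l2_nz K_nz K_def B_eq[of u] pp_eq[of u] Gpp_def[of u], unfolded eq_diff_eq[symmetric]] a2_def w1_def .
lemma w1_dv: "((\<lambda>v. w1 u v) has_real_derivative b1 u v / l1 - (l1*l2*D) * w2 u v) (at v)"
  using w1_dv0[where u=u and v=v]
  unfolding alg_W1V[OF rt[of "\<phi> u"] rh[of "A u v"] l1_nz l2_nz K_nz K_def B_eq[of u] pp_eq[of u] Gpp_def[of u], unfolded eq_diff_eq[symmetric]] b1_def w2_def .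
lemma w2_dv: "((\<lambda>v. w2 u v) has_real_derivative b2 u v / l2 + (l1*l2*D) * w1 u v) (at v)"
  using w2_dv0[where u=u and v=v]
  unfolding alg_W2V[OF rt[of "\<phi> u"] rh[of "A u v"] l1_nz l2_nz K_nz K_def B_eq[of u] pp_eq[of u] Gpp_def[of u], unfolded diff_eq_eq] b2_def w1_def .

lemma x3_du': "((\<lambda>u. x3 u v) has_real_derivative l1 * (l2 * Gp u)) (at u)"
  using x3_du by (simp add: mult.assoc)
lemma x3_dv': "((\<lambda>v. x3 u v) has_real_derivative - (l1 * (l2 * D))) (at v)"
  using x3_dv by (simp add: mult.assoc)

lemma chi3: "(\<chi> i. if i = 1 then x else if i = 2 then y else w) = vec3 x y w"
  by (simp add: vec3_eq_iff)

lemma Xmap_eq: "Xmap l1 l2 c \<theta> \<phi> f z = XX (Re z) (Im z)"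
  unfolding Xmap_def Let_def D_def[symmetric] B_def[symmetric] deriv_f deriv_phi A_def[symmetric]
    x3_def[symmetric] K_def[symmetric] chi3 XX_def vec3_inj
  unfolding w1_def w2_def
  by (intro conjI alg_X1 alg_X2 refl) (simp_all add: K_def pp_eq K_nz[unfolded K_def])

lemma XX_du: "((\<lambda>u. XX u v) has_vector_derivative XU u v) (at u)"
  unfolding XX_def XU_def fr_def
  by (rule vec3_vd) (auto intro!: derivative_eq_intros x3_du x3_du' w1_du w2_du simp: algebra_simps)
lemma XX_dv: "((\<lambda>v. XX u v) has_vector_derivative XV u v) (at v)"
  unfolding XX_def XV_def fr_def
  by (rule vec3_vd) (auto intro!: derivative_eq_intros x3_dv x3_dv' w1_dv w2_dv simp: algebra_simps)

lemma XU_du: "((\<lambda>u. XU u v) has_vector_derivative XUU u v) (at u)"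
  unfolding XU_def XUU_def by (rule fr_vd[OF l1_nz l2_nz x3_du a1_du a2_du Gp_deriv])
lemma XU_dv: "((\<lambda>v. XU u v) has_vector_derivative XUV u v) (at v)"
  unfolding XU_def XUV_def by (rule fr_vd[OF l1_nz l2_nz x3_dv a1_dv a2_dv DERIV_const])
lemma XV_du: "((\<lambda>u. XV u v) has_vector_derivative XVU u v) (at u)"
  unfolding XV_def XVU_def by (rule fr_vd[OF l1_nz l2_nz x3_du b1_du b2_du DERIV_const])
lemma XV_dv: "((\<lambda>v. XV u v) has_vector_derivative XVV u v) (at v)"
  unfolding XV_def XVV_def by (rule fr_vd[OF l1_nz l2_nz x3_dv b1_dv b2_dv DERIV_const])

end

lemma metric_scaleR_left: "metric l1 l2 p (t *\<^sub>R a) b = t * metric l1 l2 p a b"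
  unfolding metric_def by (simp add: algebra_simps)

lemma metric_zero_left: "metric l1 l2 p 0 b = 0"
  unfolding metric_def by simp

lemma indep2:
  assumes E: "metric l1 l2 p x x > 0" and G: "metric l1 l2 p y y > 0" and F: "metric l1 l2 p x y = 0"
  shows "independent {x, y} \<and> x \<noteq> y"
proof -
  have y0: "y \<noteq> 0" using G by (auto simp: metric_zero_left)
  have xy: "x \<noteq> y" using E F by auto
  have "x \<notin> span {y}"
  proof
    assume "x \<in> span {y}"
    then obtain t where t: "x = t *\<^sub>R y" by (auto simp: span_singleton)
    then have "t * metric l1 l2 p y y = 0" using F by (simp add: metric_scaleR_left)
    then have "t = 0" using G by simp
    then show False using t E by (simp add: metric_zero_left)
  qed
  moreover have "independent {y}" using y0 by (simp add: independent_insert)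
  ultimately show ?thesis using xy by (simp add: independent_insert)
qed

lemma DERIV_cosh_real: "DERIV cosh (x::real) :> sinh x"
  using has_field_derivative_cosh[OF DERIV_ident] by simp
lemma DERIV_sinh_real: "DERIV sinh (x::real) :> cosh x"
  using has_field_derivative_sinh[OF DERIV_ident] by simp

lemma d_cos: "(g::'a::real_normed_vector \<Rightarrow> real) differentiable (at x within s) \<Longrightarrow> (\<lambda>x. cos (g x)) differentiable (at x within s)"
  unfolding differentiable_def using DERIV_compose_FDERIV[OF DERIV_cos] by blast
lemma d_sin: "(g::'a::real_normed_vector \<Rightarrow> real) differentiable (at x within s) \<Longrightarrow> (\<lambda>x. sin (g x)) differentiable (at x within s)"
  unfolding differentiable_def using DERIV_compose_FDERIV[OF DERIV_sin] by blast
lemma d_cosh: "(g::'a::real_normed_vector \<Rightarrow> real) differentiable (at x within s) \<Longrightarrow> (\<lambda>x. cosh (g x)) differentiable (at x within s)"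
  unfolding differentiable_def using DERIV_compose_FDERIV[OF DERIV_cosh_real] by blast
lemma d_sinh: "(g::'a::real_normed_vector \<Rightarrow> real) differentiable (at x within s) \<Longrightarrow> (\<lambda>x. sinh (g x)) differentiable (at x within s)"
  unfolding differentiable_def using DERIV_compose_FDERIV[OF DERIV_sinh_real] by blast
lemma d_div:
  assumes "(g::'a::real_normed_vector \<Rightarrow> real) differentiable (at x within s)"
  shows "(\<lambda>x. g x / a) differentiable (at x within s)"
proof -
  have "(\<lambda>x. g x * (1/a)) differentiable (at x within s)" by (rule differentiable_mult[OF assms differentiable_const])
  then show ?thesis by simp
qed
lemma d_Re: "(\<lambda>z. Re z) differentiable F"
  unfolding differentiable_def using has_derivative_Re[OF has_derivative_ident] by blast
lemma d_Im: "(\<lambda>z. Im z) differentiable F"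
  unfolding differentiable_def using has_derivative_Im[OF has_derivative_ident] by blast

lemma alg_nn:
  assumes "hc^2 - hs^2 = 1" "pc^2+ps^2 = 1" "(hc::real) \<noteq> 0"
  shows "(pc/hc)*(pc/hc) + (ps/hc)*(ps/hc) + (-hs/hc)*(-hs/hc) = 1"
proof -
  have e: "(pc/hc)*(pc/hc) + (ps/hc)*(ps/hc) + (-hs/hc)*(-hs/hc) = (pc^2+ps^2+hs^2)/hc^2"
    by (simp add: power2_eq_square add_divide_distrib)
  have "pc^2+ps^2+hs^2 = hc^2" using assms(1,2) by simp
  then show ?thesis using e assms(3) by simp
qed
lemma alg_na: "(hc::real) \<noteq> 0 \<Longrightarrow> pc^2+ps^2 = 1 \<Longrightarrow>
   (pc/hc)*(D*hc*ps+g*hs*pc) + (ps/hc)*(-D*hc*pc+g*hs*ps) + (-hs/hc)*g = 0"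
  by (simp add: field_simps power2_eq_square) algebra
lemma alg_nb: "(hc::real) \<noteq> 0 \<Longrightarrow> pc^2+ps^2 = 1 \<Longrightarrow>
   (pc/hc)*(g*hc*ps-D*hs*pc) + (ps/hc)*(-g*hc*pc-D*hs*ps) + (-hs/hc)*(-D) = 0"
  by (simp add: field_simps power2_eq_square) algebra

lemma gauss_alg: "exp (complex_of_real a) * exp (\<i> * complex_of_real t) =
   Complex (cos t / cosh a) (sin t / cosh a) / complex_of_real (1 + - sinh a / cosh a)"
proof -
  have "1 + - sinh a / cosh a = (cosh a - sinh a) / cosh a"
    by (simp add: field_simps)
  then have 1: "1 + - sinh a / cosh a = exp (-a) / cosh a"
    unfolding cosh_minus_sinh .
  have 2: "Complex (cos t / cosh a) (sin t / cosh a) = complex_of_real (1 / cosh a) * cis t"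
    by (simp add: complex_eq_iff)
  show ?thesis unfolding 1 2 cis_conv_exp exp_of_real
    by (simp add: field_simps exp_minus)
qed

context sol begin

abbreviation "X \<equiv> Xmap l1 l2 c \<theta> \<phi> f"

lemma X_eq: "X = (\<lambda>z. XX (Re z) (Im z))" by (rule ext) (rule Xmap_eq)
lemma pu: "partial_u X = (\<lambda>z. XU (Re z) (Im z))" unfolding X_eq by (rule partial_u_gen[OF XX_du])
lemma pv: "partial_v X = (\<lambda>z. XV (Re z) (Im z))" unfolding X_eq by (rule partial_v_gen[OF XX_dv])
lemma puu: "partial_u (partial_u X) = (\<lambda>z. XUU (Re z) (Im z))" unfolding pu by (rule partial_u_gen[OF XU_du])
lemma pvu: "partial_v (partial_u X) = (\<lambda>z. XUV (Re z) (Im z))" unfolding pu by (rule partial_v_gen[OF XU_dv])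
lemma puv: "partial_u (partial_v X) = (\<lambda>z. XVU (Re z) (Im z))" unfolding pv by (rule partial_u_gen[OF XV_du])
lemma pvv: "partial_v (partial_v X) = (\<lambda>z. XVV (Re z) (Im z))" unfolding pv by (rule partial_v_gen[OF XV_dv])

lemma X3: "XX u v $ 3 = x3 u v" unfolding XX_def by simp

lemma EE: "metric l1 l2 (XX u v) (XU u v) (XU u v) = (D\<^sup>2 + (Gp u)\<^sup>2) * (cosh (A u v))\<^sup>2"
  unfolding XU_def X3[symmetric] metric_fr[OF l1_nz l2_nz] a1_def a2_def
  by (rule alg_E[OF rt[of "\<phi> u"] rh[of "A u v"] l1_nz l2_nz K_nz K_def B_eq[of u] pp_eq[of u] Gpp_def[of u]])
lemma GG: "metric l1 l2 (XX u v) (XV u v) (XV u v) = (D\<^sup>2 + (Gp u)\<^sup>2) * (cosh (A u v))\<^sup>2"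
  unfolding XV_def X3[symmetric] metric_fr[OF l1_nz l2_nz] b1_def b2_def
  by (rule alg_G[OF rt[of "\<phi> u"] rh[of "A u v"] l1_nz l2_nz K_nz K_def B_eq[of u] pp_eq[of u] Gpp_def[of u]])
lemma FF: "metric l1 l2 (XX u v) (XU u v) (XV u v) = 0"
  unfolding XU_def XV_def X3[symmetric] metric_fr[OF l1_nz l2_nz] a1_def a2_def b1_def b2_def
  by (rule alg_F[OF rt[of "\<phi> u"] rh[of "A u v"] l1_nz l2_nz K_nz K_def B_eq[of u] pp_eq[of u] Gpp_def[of u]])

lemma DG_pos: "D\<^sup>2 + (Gp u)\<^sup>2 > 0"
proof (rule ccontr)
  assume "\<not> ?thesis"
  then have "D\<^sup>2 \<le> 0" "(Gp u)\<^sup>2 \<le> 0" by (smt (verit) zero_le_power2)+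
  then have D0: "D = 0" and G0: "Gp u = 0" by simp_all
  have "sin \<theta> = 0" using D0 by (simp add: D_def)
  moreover have "pp u = c" using G0 pp_eq[of u] by simp
  then have "R u = c\<^sup>2" using pp_sq[of u] by simp
  then have "cos \<theta> * B u = 0" using D0 by (simp add: R_def)
  then have "cos \<theta> = 0" by simp
  ultimately show False using sin_cos_squared_add[of \<theta>] by simp
qed

lemma E_pos: "(D\<^sup>2 + (Gp u)\<^sup>2) * (cosh (A u v))\<^sup>2 > 0"
  using DG_pos[of u] by (simp add: zero_less_mult_iff)


lemma cov_u: "cov_deriv l1 l2 X partial_u (partial_u X) z =
   fr l1 l2 (x3 (Re z) (Im z)) (a1u (Re z) (Im z)) (a2u (Re z) (Im z)) (Gpp (Re z))
 + fr l1 l2 (x3 (Re z) (Im z)) (- l2\<^sup>2 * a2 (Re z) (Im z) * Gp (Re z)) (l1\<^sup>2 * a1 (Re z) (Im z) * Gp (Re z))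
      ((l2\<^sup>2 - l1\<^sup>2) * a1 (Re z) (Im z) * a2 (Re z) (Im z))"
proof -
  have "(cov_deriv l1 l2 X partial_u (partial_u X) z) $ k = (fr l1 l2 (x3 (Re z) (Im z)) (a1u (Re z) (Im z)) (a2u (Re z) (Im z)) (Gpp (Re z))
 + fr l1 l2 (x3 (Re z) (Im z)) (- l2\<^sup>2 * a2 (Re z) (Im z) * Gp (Re z)) (l1\<^sup>2 * a1 (Re z) (Im z) * Gp (Re z))
      ((l2\<^sup>2 - l1\<^sup>2) * a1 (Re z) (Im z) * a2 (Re z) (Im z))) $ k" for k
  proof -
    note cq = chr_quad[OF l1_nz l2_nz, of "XX (Re z) (Im z)" k "a1 (Re z) (Im z)" "a2 (Re z) (Im z)" "Gp (Re z)", unfolded X3]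
    show ?thesis
      unfolding cov_deriv_def unfolding puu unfolding pu Xmap_eq XUU_def XU_def
      apply (simp only: vec_lambda_beta vector_add_component vector_scaleR_component real_scaleR_def)
      using cq by linarith
  qed
  then show ?thesis by (simp add: vec_eq_iff)
qed

lemma cov_v: "cov_deriv l1 l2 X partial_v (partial_v X) z =
   fr l1 l2 (x3 (Re z) (Im z)) (b1v (Re z) (Im z)) (b2v (Re z) (Im z)) 0
 + fr l1 l2 (x3 (Re z) (Im z)) (- l2\<^sup>2 * b2 (Re z) (Im z) * (- D)) (l1\<^sup>2 * b1 (Re z) (Im z) * (- D))
      ((l2\<^sup>2 - l1\<^sup>2) * b1 (Re z) (Im z) * b2 (Re z) (Im z))"
proof -
  have "(cov_deriv l1 l2 X partial_v (partial_v X) z) $ k = (fr l1 l2 (x3 (Re z) (Im z)) (b1v (Re z) (Im z)) (b2v (Re z) (Im z)) 0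
 + fr l1 l2 (x3 (Re z) (Im z)) (- l2\<^sup>2 * b2 (Re z) (Im z) * (- D)) (l1\<^sup>2 * b1 (Re z) (Im z) * (- D))
      ((l2\<^sup>2 - l1\<^sup>2) * b1 (Re z) (Im z) * b2 (Re z) (Im z))) $ k" for k
  proof -
    note cq = chr_quad[OF l1_nz l2_nz, of "XX (Re z) (Im z)" k "b1 (Re z) (Im z)" "b2 (Re z) (Im z)" "- D", unfolded X3]
    have e: "(- (l1*l2)*D) * t = l1 * l2 * - D * t" for t by simp
    show ?thesis
      unfolding cov_deriv_def unfolding pvv unfolding pv Xmap_eq XVV_def XV_def
      apply (simp only: vec_lambda_beta vector_add_component vector_scaleR_component real_scaleR_def)
      using cq e[of "dfr l1 l2 (x3 (Re z) (Im z)) (b1 (Re z) (Im z)) (b2 (Re z) (Im z)) $ k"] by linarith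
  qed
  then show ?thesis by (simp add: vec_eq_iff)
qed

lemma harmonic: "cov_deriv l1 l2 X partial_u (partial_u X) z + cov_deriv l1 l2 X partial_v (partial_v X) z = 0"
proof -
  let ?u = "Re z" and ?v = "Im z"
  note hyps = rt[of "\<phi> ?u"] rh[of "A ?u ?v"] l1_nz l2_nz K_nz K_def B_eq[of ?u] pp_eq[of ?u] Gpp_def[of ?u]
  have s1: "a1u ?u ?v + (- l2\<^sup>2 * a2 ?u ?v * Gp ?u + (b1v ?u ?v + - l2\<^sup>2 * b2 ?u ?v * - D)) = 0"
    using alg_F1[OF hyps] unfolding a1u_def a2_def b1v_def b2_def by algebra
  have s2: "a2u ?u ?v + (l1\<^sup>2 * a1 ?u ?v * Gp ?u + (b2v ?u ?v + l1\<^sup>2 * b1 ?u ?v * - D)) = 0"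
    using alg_F2[OF hyps] unfolding a2u_def a1_def b2v_def b1_def by algebra
  have s3: "Gpp ?u + ((l2\<^sup>2 - l1\<^sup>2) * a1 ?u ?v * a2 ?u ?v + (0 + (l2\<^sup>2 - l1\<^sup>2) * b1 ?u ?v * b2 ?u ?v)) = 0"
    using alg_F3[OF hyps] unfolding a1_def a2_def b1_def b2_def by algebra
  show ?thesis
    unfolding cov_u cov_v fr_add add.assoc[symmetric]
    unfolding add.assoc fr_add s1 s2 s3 fr_zero ..
qed


lemma EE': "metric l1 l2 (X z) (partial_u X z) (partial_u X z) = (D\<^sup>2 + (Gp (Re z))\<^sup>2) * (cosh (A (Re z) (Im z)))\<^sup>2"
  unfolding pu Xmap_eq by (rule EE)
lemma GG': "metric l1 l2 (X z) (partial_v X z) (partial_v X z) = (D\<^sup>2 + (Gp (Re z))\<^sup>2) * (cosh (A (Re z) (Im z)))\<^sup>2"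
  unfolding pv Xmap_eq by (rule GG)
lemma FF': "metric l1 l2 (X z) (partial_u X z) (partial_v X z) = 0"
  unfolding pu pv Xmap_eq by (rule FF)

lemma conformal: "conformal l1 l2 X"
  unfolding conformal_def using EE' GG' FF' by simp

lemma minimal: "minimal_surface l1 l2 X"
  unfolding minimal_surface_def Let_def
proof
  fix z
  let ?m = "(D\<^sup>2 + (Gp (Re z))\<^sup>2) * (cosh (A (Re z) (Im z)))\<^sup>2"
  have "?m *\<^sub>R cov_deriv l1 l2 X partial_u (partial_u X) z - (2 * 0) *\<^sub>R cov_deriv l1 l2 X partial_u (partial_v X) z
      + ?m *\<^sub>R cov_deriv l1 l2 X partial_v (partial_v X) z = 0"
    using harmonic[of z] by (simp add: scaleR_add_right[symmetric])
  then show "(1 / (metric l1 l2 (X z) (partial_u X z) (partial_u X z) * metric l1 l2 (X z) (partial_v X z) (partial_v X z) -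
             (metric l1 l2 (X z) (partial_u X z) (partial_v X z))\<^sup>2)) *\<^sub>R
          (metric l1 l2 (X z) (partial_v X z) (partial_v X z) *\<^sub>R cov_deriv l1 l2 X partial_u (partial_u X) z -
           (2 * metric l1 l2 (X z) (partial_u X z) (partial_v X z)) *\<^sub>R cov_deriv l1 l2 X partial_u (partial_v X) z +
           metric l1 l2 (X z) (partial_u X z) (partial_u X z) *\<^sub>R cov_deriv l1 l2 X partial_v (partial_v X) z)
          \<in> span {partial_u X z, partial_v X z}"
    unfolding EE' GG' FF' by (simp add: span_zero)
qed

lemma indep: "independent {partial_u X z, partial_v X z} \<and> partial_u X z \<noteq> partial_v X z"
  by (rule indep2[of l1 l2 "X z"]) (use EE' GG' FF' E_pos in auto)


lemma phi_hd: "(g has_derivative g') (at x within s) \<Longrightarrow> ((\<lambda>x. \<phi> (g x)) has_derivative (\<lambda>h. g' h * pp (g x))) (at x within s)"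
  by (rule DERIV_compose_FDERIV[OF phi_deriv])
lemma f_hd: "(g has_derivative g') (at x within s) \<Longrightarrow> ((\<lambda>x. f (g x)) has_derivative (\<lambda>h. g' h * (D * B (g x)))) (at x within s)"
  by (rule DERIV_compose_FDERIV[OF f_deriv])
lemma G_hd: "(g has_derivative g') (at x within s) \<Longrightarrow> ((\<lambda>x. Gfun l1 l2 c \<phi> (g x)) has_derivative (\<lambda>h. g' h * Gp (g x))) (at x within s)"
  by (rule DERIV_compose_FDERIV[OF G_deriv])
lemma Gp_hd: "(g has_derivative g') (at x within s) \<Longrightarrow> ((\<lambda>x. Gp (g x)) has_derivative (\<lambda>h. g' h * Gpp (g x))) (at x within s)"
  by (rule DERIV_compose_FDERIV[OF Gp_deriv])

lemma d_phi: "g differentiable (at x within s) \<Longrightarrow> (\<lambda>x. \<phi> (g x)) differentiable (at x within s)"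
  unfolding differentiable_def using phi_hd by blast
lemma d_f: "g differentiable (at x within s) \<Longrightarrow> (\<lambda>x. f (g x)) differentiable (at x within s)"
  unfolding differentiable_def using f_hd by blast
lemma d_G: "g differentiable (at x within s) \<Longrightarrow> (\<lambda>x. Gfun l1 l2 c \<phi> (g x)) differentiable (at x within s)"
  unfolding differentiable_def using G_hd by blast
lemma d_Gp: "g differentiable (at x within s) \<Longrightarrow> (\<lambda>x. Gp (g x)) differentiable (at x within s)"
  unfolding differentiable_def using Gp_hd by blast

lemmas drules = differentiable_power  differentiable_add differentiable_diff differentiable_mult differentiable_minus
  d_cos d_sin d_cosh d_sinh d_div d_Re d_Im d_phi d_f d_G d_Gp differentiable_const

lemma vec3_diff:
  assumes "p differentiable (at x within s)" "q differentiable (at x within s)" "r differentiable (at x within s)"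
  shows "(\<lambda>z. vec3 (p z) (q z) (r z)) differentiable (at x within s)"
  unfolding vec3_def using assms by (intro differentiable_add differentiable_scaleR differentiable_const)

lemma X_diff: "X differentiable (at z)"
  unfolding X_eq XX_def x3_def w1_def w2_def A_def
  by (intro vec3_diff drules)

lemma pu_diff: "partial_u X differentiable (at z)"
  unfolding pu XU_def fr_def x3_def a1_def a2_def A_def
  by (intro vec3_diff drules)

lemma pv_diff: "partial_v X differentiable (at z)"
  unfolding pv XV_def fr_def x3_def b1_def b2_def A_def
  by (intro vec3_diff drules)


lemma d_pp: "g differentiable (at x within s) \<Longrightarrow> (\<lambda>x. pp (g x)) differentiable (at x within s)"
  unfolding differentiable_def using DERIV_compose_FDERIV[OF pp_deriv] by blast
lemma d_B: "g differentiable (at x within s) \<Longrightarrow> (\<lambda>x. B (g x)) differentiable (at x within s)"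
  unfolding differentiable_def using DERIV_compose_FDERIV[OF B_deriv] by blast

lemma cont_of_diff: "(\<And>z. h differentiable (at z)) \<Longrightarrow> continuous_on UNIV h"
  by (intro continuous_at_imp_continuous_on ballI differentiable_imp_continuous_within) auto

lemmas unf2 = fr_def dfr_def vec3_add vec3_scaleR x3_def A_def Gpp_def
  a1_def a2_def b1_def b2_def a1u_def a2u_def a1v_def a2v_def b1u_def b2u_def b1v_def b2v_def

lemma C2: "C2_immersion X"
  unfolding C2_immersion_def
proof (intro conjI allI)
  show "X differentiable at z" for z by (rule X_diff)
  show "partial_u X differentiable at z" for z by (rule pu_diff)
  show "partial_v X differentiable at z" for z by (rule pv_diff)
  show "continuous_on UNIV (partial_u X)" by (rule cont_of_diff[OF pu_diff])
  show "continuous_on UNIV (partial_v X)" by (rule cont_of_diff[OF pv_diff])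
  show "continuous_on UNIV (partial_u (partial_u X))"
    unfolding puu XUU_def unf2 apply (rule cont_of_diff) by (intro vec3_diff drules d_pp d_B)
  show "continuous_on UNIV (partial_v (partial_u X))"
    unfolding pvu XUV_def unf2 by (rule cont_of_diff) (intro vec3_diff drules d_pp d_B)
  show "continuous_on UNIV (partial_u (partial_v X))"
    unfolding puv XVU_def unf2 by (rule cont_of_diff) (intro vec3_diff drules d_pp d_B)
  show "continuous_on UNIV (partial_v (partial_v X))"
    unfolding pvv XVV_def unf2 by (rule cont_of_diff) (intro vec3_diff drules d_pp d_B)
  show "independent {partial_u X z, partial_v X z}" for z using indep by blast
  show "partial_u X z \<noteq> partial_v X z" for z using indep by blast
qed


lemma gauss: "has_gauss_map l1 l2 X
   (\<lambda>z. exp (complex_of_real (f (Re z) + c * Im z)) * exp (\<i> * complex_of_real (\<phi> (Re z))))"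
proof -
  define n where "n z = vec3 (cos (\<phi> (Re z)) / cosh (A (Re z) (Im z))) (sin (\<phi> (Re z)) / cosh (A (Re z) (Im z)))
      (- sinh (A (Re z) (Im z)) / cosh (A (Re z) (Im z)))" for z
  have P: "(\<Sum>k\<in>UNIV. n z $ k *\<^sub>R frame l1 l2 (X z) k) = (\<Sum>k\<in>UNIV. n z $ k *\<^sub>R frame l1 l2 (X z) k) \<and>
     metric l1 l2 (X z) (\<Sum>k\<in>UNIV. n z $ k *\<^sub>R frame l1 l2 (X z) k) (\<Sum>k\<in>UNIV. n z $ k *\<^sub>R frame l1 l2 (X z) k) = 1 \<and>
     metric l1 l2 (X z) (\<Sum>k\<in>UNIV. n z $ k *\<^sub>R frame l1 l2 (X z) k) (partial_u X z) = 0 \<and>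
     metric l1 l2 (X z) (\<Sum>k\<in>UNIV. n z $ k *\<^sub>R frame l1 l2 (X z) k) (partial_v X z) = 0 \<and>
     exp (complex_of_real (f (Re z) + c * Im z)) * exp (\<i> * complex_of_real (\<phi> (Re z))) =
       Complex (n z $ 1) (n z $ 2) / complex_of_real (1 + n z $ 3)" for z
  proof -
    let ?u = "Re z" and ?v = "Im z"
    have xu: "partial_u X z = fr l1 l2 (X z $ 3) (a1 ?u ?v) (a2 ?u ?v) (Gp ?u)"
      unfolding pu Xmap_eq X3 XU_def ..
    have xv: "partial_v X z = fr l1 l2 (X z $ 3) (b1 ?u ?v) (b2 ?u ?v) (- D)"
      unfolding pv Xmap_eq X3 XV_def ..
    show ?thesis
      unfolding frame_sum xu xv metric_fr[OF l1_nz l2_nz]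
      unfolding n_def vec3_nth a1_def a2_def b1_def b2_def
    proof (intro conjI refl)
      show "(cos (\<phi> ?u) / cosh (A ?u ?v)) * (cos (\<phi> ?u) / cosh (A ?u ?v)) + (sin (\<phi> ?u) / cosh (A ?u ?v)) * (sin (\<phi> ?u) / cosh (A ?u ?v))
        + (- sinh (A ?u ?v) / cosh (A ?u ?v)) * (- sinh (A ?u ?v) / cosh (A ?u ?v)) = 1"
        by (rule alg_nn[OF rh rt cosh_real_nonzero])
      show "(cos (\<phi> ?u) / cosh (A ?u ?v)) * (D * cosh (A ?u ?v) * sin (\<phi> ?u) + Gp ?u * sinh (A ?u ?v) * cos (\<phi> ?u))
        + (sin (\<phi> ?u) / cosh (A ?u ?v)) * (- D * cosh (A ?u ?v) * cos (\<phi> ?u) + Gp ?u * sinh (A ?u ?v) * sin (\<phi> ?u))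
        + (- sinh (A ?u ?v) / cosh (A ?u ?v)) * Gp ?u = 0"
        by (rule alg_na[OF cosh_real_nonzero rt])
      show "(cos (\<phi> ?u) / cosh (A ?u ?v)) * (Gp ?u * cosh (A ?u ?v) * sin (\<phi> ?u) - D * sinh (A ?u ?v) * cos (\<phi> ?u))
        + (sin (\<phi> ?u) / cosh (A ?u ?v)) * (- Gp ?u * cosh (A ?u ?v) * cos (\<phi> ?u) - D * sinh (A ?u ?v) * sin (\<phi> ?u))
        + (- sinh (A ?u ?v) / cosh (A ?u ?v)) * (- D) = 0"
        by (rule alg_nb[OF cosh_real_nonzero rt])
      show "exp (complex_of_real (f ?u + c * ?v)) * exp (\<i> * complex_of_real (\<phi> ?u)) =
        Complex (cos (\<phi> ?u) / cosh (A ?u ?v)) (sin (\<phi> ?u) / cosh (A ?u ?v)) / complex_of_real (1 + - sinh (A ?u ?v) / cosh (A ?u ?v))"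
        unfolding A_def by (rule gauss_alg)
    qed
  qed
  show ?thesis unfolding has_gauss_map_def
    by (rule exI[of _ "\<lambda>z. \<Sum>k\<in>UNIV. n z $ k *\<^sub>R frame l1 l2 (X z) k"], rule exI[of _ n]) (use P in blast)
qed

lemma main: "conformal_minimal_immersion l1 l2 X \<and>
   has_gauss_map l1 l2 X (\<lambda>z. exp (complex_of_real (f (Re z) + c * Im z)) * exp (\<i> * complex_of_real (\<phi> (Re z))))"
  unfolding conformal_minimal_immersion_def using C2 conformal minimal gauss by blast

end

theorem theorem5p1:
  fixes l1 l2 c \<theta> :: real and \<phi> f :: "real \<Rightarrow> real"
  assumes lam: "admissible_lambdas l1 l2"
    and ct: "(c, \<theta>) \<in> Omega l1"
    and phi0: "\<phi> 0 = 0"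
    and phi_ode: "\<And>u. (\<phi> has_real_derivative
          sqrt (c\<^sup>2 + 2 * cos \<theta> * Bfun l1 l2 \<phi> u - (sin \<theta> / c)\<^sup>2 * (Bfun l1 l2 \<phi> u)\<^sup>2)) (at u)"
    and f0: "f 0 = 0"
    and f_ode: "\<And>u. (f has_real_derivative (sin \<theta> / c) * Bfun l1 l2 \<phi> u) (at u)"
  shows "conformal_minimal_immersion l1 l2 (Xmap l1 l2 c \<theta> \<phi> f) \<and>
         has_gauss_map l1 l2 (Xmap l1 l2 c \<theta> \<phi> f)
           (\<lambda>z. exp (complex_of_real (f (Re z) + c * Im z)) * exp (\<i> * complex_of_real (\<phi> (Re z))))"
  proof -
  interpret sol l1 l2 c \<theta> \<phi> f
    by (intro sol.intro lam ct phi0 f0 phi_ode f_ode)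
  show ?thesis by (rule main)
qed

end
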